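(* Let $\Omega\subset\mathbb{R}^2$ be a bounded planar convex set with positive measure that can roll unimpeded inside a disc. Then there is a constant $C$ such that for all $\xi\in\mathbb{R}^2\setminus\{0\}$, \[ |\widehat{\chi_{\Omega}}(\xi)|\leqslant C|\xi|^{-3/2}. \]
   Context: $\widehat{\chi_{\Omega}}(\xi)=\int_{\mathbb{R}^2}\chi_{\Omega}(y)e^{-2\pi i\xi\cdot y}dy$ where $\chi_\Omega$ is the characteristic function of $\Omega$. A convex set $\Omega$ can roll unimpeded inside a (closed) disc $\Delta$ if for every point $x$ on the boundary $\partial\Delta$ there is a translated copy of $\Omega$ contained in $\Delta$ whose boundary touches $\partial\Delta$ at $x$. *)

theory Defs
  imports "HOL-Analysis.Analysis"
begin

definition fourier_char :: "(real^2) set \<Rightarrow> real^2 \<Rightarrow> complex" where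
  "fourier_char \<Omega> \<xi> = integral \<Omega> (\<lambda>y. exp (- (2 * pi * \<i> * complex_of_real (\<xi> \<bullet> y))))"

definition rolls_unimpeded_in :: "(real^2) set \<Rightarrow> real^2 \<Rightarrow> real \<Rightarrow> bool" where
  "rolls_unimpeded_in \<Omega> c R \<longleftrightarrow> 0 < R \<and>
     (\<forall>x \<in> sphere c R. \<exists>t. (\<lambda>y. t + y) ` \<Omega> \<subseteq> cball c R \<and> x \<in> frontier ((\<lambda>y. t + y) ` \<Omega>))"

end

theory Submission
  imports Defs
begin


definition EE :: "real \<Rightarrow> real \<Rightarrow> complex" where
  "EE lam s = exp (- (2 * pi * \<i> * complex_of_real (lam * s)))"

lemma EE_norm[simp]: "norm (EE lam s) = 1"
  unfolding EE_def by (simp add: norm_exp_eq_Re)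

lemma EE_shift:
  assumes "lam * h = 1/2"
  shows "EE lam (s + h) = - EE lam s" "EE lam (s - h) = - EE lam s"
proof -
  have lh: "complex_of_real (lam * h) = 1/2"
  proof -
    have "complex_of_real (lam * h) = complex_of_real (1/2)" by (simp only: assms)
    also have "\<dots> = 1/2" by simp
    finally show ?thesis .
  qed
  have e: "exp (- (2 * pi * \<i> * complex_of_real (lam * h))) = -1"
    unfolding lh by (simp add: exp_minus)
  have "EE lam (s + h) = EE lam s * exp (- (2 * pi * \<i> * complex_of_real (lam * h)))"
    unfolding EE_def by (simp add: distrib_left exp_add[symmetric] algebra_simps)
  then show "EE lam (s + h) = - EE lam s" using e by simp
  have e2: "exp ((2 * pi * \<i> * complex_of_real (lam * h))) = -1"
    unfolding lh by simp
  have "EE lam (s - h) = EE lam s * exp ((2 * pi * \<i> * complex_of_real (lam * h)))"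
    unfolding EE_def by (simp add: right_diff_distrib exp_add[symmetric] algebra_simps)
  then show "EE lam (s - h) = - EE lam s" using e2 by simp
qed

lemma EE_cont[continuous_intros]: "continuous_on A (EE lam)"
  unfolding EE_def by (intro continuous_intros)

lemma EE_meas[measurable]: "EE lam \<in> borel_measurable borel"
  by (intro borel_measurable_continuous_onI EE_cont)

lemma oneD:
  fixes w :: "real \<Rightarrow> real" and a b K lam :: real
  assumes wint: "integrable lborel w"
  and nonneg: "\<And>s. 0 \<le> w s"
  and out: "\<And>s. s < a \<or> b < s \<Longrightarrow> w s = 0"
  and lo: "\<And>s. a \<le> s \<Longrightarrow> w s \<le> K * sqrt (s - a)"
  and hi: "\<And>s. s \<le> b \<Longrightarrow> w s \<le> K * sqrt (b - s)"
  and conc: "\<And>s h. 0 \<le> h \<Longrightarrow> a \<le> s - h \<Longrightarrow> s + h \<le> b \<Longrightarrow> w (s - h) + w (s + h) \<le> 2 * w s"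
  and K: "0 \<le> K"
  and lam: "0 < lam"
  shows "norm (\<integral>s. w s *\<^sub>R EE lam s \<partial>lborel) \<le> K * lam powr (-3/2)"
proof -
  define h where "h = 1 / (2 * lam)"
  have h: "0 < h" "lam * h = 1/2" using lam by (auto simp: h_def)
  define G where "G = (\<integral>s. w s *\<^sub>R EE lam s \<partial>lborel)"
  have [measurable]: "w \<in> borel_measurable borel" using wint by auto
  have intsh: "integrable lborel (\<lambda>x. w (t + x))" for t
    using lborel_integrable_real_affine[OF wint, of 1 t] by simp
  have intE: "integrable lborel (\<lambda>x. w (t + x) *\<^sub>R EE lam x)" for t
    by (rule Bochner_Integration.integrable_bound[OF intsh[of t]]) (auto simp: nonneg)
  have G1: "G = - (\<integral>x. w (x + h) *\<^sub>R EE lam x \<partial>lborel)"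
  proof -
    have "G = (\<integral>x. w (h + 1 * x) *\<^sub>R EE lam (h + 1 * x) \<partial>lborel)"
      unfolding G_def using lborel_integral_real_affine[of 1 "\<lambda>s. w s *\<^sub>R EE lam s" h] by simp
    also have "\<dots> = (\<integral>x. - (w (x + h) *\<^sub>R EE lam x) \<partial>lborel)"
      using EE_shift(1)[OF h(2)] by (simp add: add.commute)
    finally show ?thesis by simp
  qed
  have G2: "G = - (\<integral>x. w (x - h) *\<^sub>R EE lam x \<partial>lborel)"
  proof -
    have "G = (\<integral>x. w (-h + 1 * x) *\<^sub>R EE lam (-h + 1 * x) \<partial>lborel)"
      unfolding G_def using lborel_integral_real_affine[of 1 "\<lambda>s. w s *\<^sub>R EE lam s" "-h"] by simp
    also have "\<dots> = (\<integral>x. - (w (x - h) *\<^sub>R EE lam x) \<partial>lborel)"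
      using EE_shift(2)[OF h(2)] by simp
    finally show ?thesis by simp
  qed
  define D where "D x = 2 * w x - w (x - h) - w (x + h)" for x
  have i0: "integrable lborel (\<lambda>x. w x *\<^sub>R EE lam x)" using intE[of 0] by simp
  have i1: "integrable lborel (\<lambda>x. w (x + h) *\<^sub>R EE lam x)" using intE[of h] by (simp add: add.commute)
  have i2: "integrable lborel (\<lambda>x. w (x - h) *\<^sub>R EE lam x)" using intE[of "-h"] by simp
  have "4 *\<^sub>R G = (\<integral>x. 2 *\<^sub>R (w x *\<^sub>R EE lam x) - w (x - h) *\<^sub>R EE lam x - w (x + h) *\<^sub>R EE lam x \<partial>lborel)"
  proof -
    have i0': "integrable lborel (\<lambda>x. 2 *\<^sub>R (w x *\<^sub>R EE lam x))"
      by (intro integrable_scaleR_right i0)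
    have s1: "(\<integral>x. 2 *\<^sub>R (w x *\<^sub>R EE lam x) - w (x - h) *\<^sub>R EE lam x - w (x + h) *\<^sub>R EE lam x \<partial>lborel)
      = (\<integral>x. 2 *\<^sub>R (w x *\<^sub>R EE lam x) \<partial>lborel) - (\<integral>x. w (x - h) *\<^sub>R EE lam x \<partial>lborel) - (\<integral>x. w (x + h) *\<^sub>R EE lam x \<partial>lborel)"
        by (simp only: Bochner_Integration.integral_diff[OF Bochner_Integration.integrable_diff[OF i0' i2] i1]
           Bochner_Integration.integral_diff[OF i0' i2])
    have s2: "(\<integral>x. 2 *\<^sub>R (w x *\<^sub>R EE lam x) \<partial>lborel) = 2 *\<^sub>R G"
      unfolding G_def by (rule integral_scaleR_right)
    have e1: "(\<integral>x. w (x + h) *\<^sub>R EE lam x \<partial>lborel) = - G" using G1 by simp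
    have e2: "(\<integral>x. w (x - h) *\<^sub>R EE lam x \<partial>lborel) = - G" using G2 by simp
    have s3: "2 *\<^sub>R G - - G - - G = 4 *\<^sub>R G" by (simp add: scaleR_conv_of_real algebra_simps)
    show ?thesis unfolding s1 s2 e1 e2 s3 ..
  qed
  also have "\<dots> = (\<integral>x. D x *\<^sub>R EE lam x \<partial>lborel)"
    by (rule Bochner_Integration.integral_cong) (auto simp: D_def algebra_simps)
  finally have G4: "4 *\<^sub>R G = (\<integral>x. D x *\<^sub>R EE lam x \<partial>lborel)" .
  have iw1: "integrable lborel (\<lambda>x. w (x + h))" using intsh[of h] by (simp add: add.commute)
  have iw2: "integrable lborel (\<lambda>x. w (x - h))" using intsh[of "-h"] by simp
  have iD: "integrable lborel D" unfolding D_def using wint iw1 iw2 by auto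
  have iDE: "integrable lborel (\<lambda>x. D x *\<^sub>R EE lam x)"
    by (rule Bochner_Integration.integrable_bound[OF iD]) (auto simp: D_def)
  have w1: "(\<integral>x. w (x + h) \<partial>lborel) = (\<integral>x. w x \<partial>lborel)"
    using lborel_integral_real_affine[of 1 w h] by (simp add: add.commute)
  have w2: "(\<integral>x. w (x - h) \<partial>lborel) = (\<integral>x. w x \<partial>lborel)"
    using lborel_integral_real_affine[of 1 w "-h"] by simp
  have D0: "(\<integral>x. D x \<partial>lborel) = 0"
    unfolding D_def using wint iw1 iw2 w1 w2 by simp
  define c where "c = K * sqrt (2 * h)"
  have c0: "0 \<le> c" using K h by (simp add: c_def)
  define B where "B x = c * (indicator {a-h..a+h} x + indicator {b-h..b+h} x)" for x
  have B0: "0 \<le> B x" for x using c0 by (simp add: B_def)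
  have negD: "- D x \<le> B x" for x
  proof -
    consider "a \<le> x - h \<and> x + h \<le> b" | "x - h < a" | "b < x + h" by linarith
    then show ?thesis
    proof cases
      case 1 then show ?thesis using conc[of h x] h(1) B0[of x] by (simp add: D_def)
    next
      case 2
      have "w (x - h) = 0" using out 2 by auto
      then have "- D x \<le> w (x + h)" using nonneg[of x] by (simp add: D_def)
      also have "w (x + h) \<le> B x"
      proof (cases "a \<le> x + h \<and> x + h \<le> b")
        case True
        have "w (x + h) \<le> K * sqrt (x + h - a)" using lo True by auto
        also have "\<dots> \<le> c" unfolding c_def using 2 K by (intro mult_left_mono) auto
        also have "c \<le> B x" using True 2 c0 by (simp add: B_def indicator_def)
        finally show ?thesis .
      next
        case False then show ?thesis using out[of "x+h"] B0 by fastforce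
      qed
      finally show ?thesis .
    next
      case 3
      have "w (x + h) = 0" using out 3 by auto
      then have "- D x \<le> w (x - h)" using nonneg[of x] by (simp add: D_def)
      also have "w (x - h) \<le> B x"
      proof (cases "a \<le> x - h \<and> x - h \<le> b")
        case True
        have "w (x - h) \<le> K * sqrt (b - (x - h))" using hi True by auto
        also have "\<dots> \<le> c" unfolding c_def using 3 K by (intro mult_left_mono) auto
        also have "c \<le> B x" using True 3 c0 by (simp add: B_def indicator_def)
        finally show ?thesis .
      next
        case False then show ?thesis using out[of "x-h"] B0 by fastforce
      qed
      finally show ?thesis .
    qed
  qed
  have iB: "integrable lborel B" unfolding B_def
    by (intro integrable_mult_right Bochner_Integration.integrable_add) (auto simp: integrable_indicator_iff emeasure_lborel_Icc_eq)
  have intB: "(\<integral>x. B x \<partial>lborel) = c * (4 * h)"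
    unfolding B_def using h by (subst integral_mult_right_zero, subst Bochner_Integration.integral_add)
      (auto simp: integrable_indicator_iff emeasure_lborel_Icc_eq)
  have "norm (4 *\<^sub>R G) \<le> (\<integral>x. norm (D x *\<^sub>R EE lam x) \<partial>lborel)"
    unfolding G4 by (rule integral_norm_bound)
  also have "\<dots> = (\<integral>x. \<bar>D x\<bar> \<partial>lborel)" by simp
  also have "\<dots> \<le> (\<integral>x. D x + 2 * B x \<partial>lborel)"
  proof (intro integral_mono iD iB integrable_abs Bochner_Integration.integrable_add integrable_mult_right)
    fix x show "\<bar>D x\<bar> \<le> D x + 2 * B x" using negD[of x] B0[of x] by linarith
  qed
  also have "\<dots> = 2 * (c * (4 * h))"
    using iD iB D0 intB by simp
  finally have "4 * norm G \<le> 8 * c * h" by simp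
  then have nG: "norm G \<le> 2 * c * h" by simp
  have "2 * c * h = K * (sqrt (1/lam) * (1/lam))"
    unfolding c_def h_def using lam by simp
  also have "sqrt (1/lam) * (1/lam) = lam powr (-3/2)"
  proof -
    have "sqrt (1/lam) = (1/lam) powr (1/2)" using lam by (simp add: powr_half_sqrt)
    also have "\<dots> = lam powr (-1/2)" using lam by (simp add: powr_divide powr_minus_divide)
    finally have "sqrt (1/lam) = lam powr (-1/2)" .
    then have "sqrt (1/lam) * (1/lam) = lam powr (-1/2) * lam powr (-1)" using lam by (simp add: powr_minus_divide)
    also have "\<dots> = lam powr (-1/2 + -1)" by (simp only: powr_add)
    also have "\<dots> = lam powr (-3/2)" by simp
    finally show ?thesis .
  qed
  finally show ?thesis using nG unfolding G_def by simp
qed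



lemma inner2: "(x::real^2) \<bullet> y = x$1*y$1 + x$2*y$2"
  by (simp add: inner_vec_def sum_2)

lemma prod_Basis2: "(\<Prod>b\<in>(Basis::(real^2) set). f b) = f (axis 1 1) * f (axis 2 1)"
proof -
  have "(Basis::(real^2) set) = (\<lambda>i. axis i 1) ` UNIV"
    unfolding Basis_vec_def by auto
  moreover have "inj (\<lambda>i::2. axis i (1::real))" by (auto intro!: injI simp: axis_eq_axis)
  ultimately have B2: "(Basis::(real^2) set) = {axis 1 1, axis 2 1}" by (simp add: UNIV_2)
  have ne: "axis 1 (1::real) \<noteq> (axis 2 1 :: real^2)" by (simp add: axis_eq_axis)
  show ?thesis unfolding B2 using ne by simp
qed

lemma psi_distr: "distr (lborel :: (real\<times>real) measure) borel (\<lambda>p. fst p *\<^sub>R axis 1 1 + snd p *\<^sub>R axis 2 1 :: real^2) = lborel"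
proof (rule lborel_eqI[symmetric])
  have meas: "(\<lambda>p. fst p *\<^sub>R axis 1 1 + snd p *\<^sub>R axis 2 1 :: real^2) \<in> borel_measurable lborel"
  proof -
    have "(\<lambda>p::real\<times>real. fst p *\<^sub>R axis 1 1 + snd p *\<^sub>R axis 2 1 :: real^2) \<in> borel_measurable borel"
      by (intro borel_measurable_continuous_onI continuous_intros)
    then show ?thesis by (simp cong: measurable_cong_sets)
  qed
  fix l r :: "real^2" assume lr: "\<And>b. b \<in> Basis \<Longrightarrow> l \<bullet> b \<le> r \<bullet> b"
  have l1: "l$1 \<le> r$1" "l$2 \<le> r$2" using lr[of "axis 1 1"] lr[of "axis 2 1"]
    by (auto simp: Basis_vec_def inner_axis)
  have pre: "(\<lambda>p. fst p *\<^sub>R axis 1 1 + snd p *\<^sub>R axis 2 1 :: real^2) -` box l r \<inter> space lborel = {l$1<..<r$1} \<times> {l$2<..<r$2}"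
    by (auto simp: mem_box_cart forall_2 axis_def)
  show "emeasure (distr lborel borel (\<lambda>p. fst p *\<^sub>R axis 1 1 + snd p *\<^sub>R axis 2 1 :: real^2)) (box l r) = (\<Prod>b\<in>Basis. (r - l) \<bullet> b)"
  proof -
    have "emeasure (distr lborel borel (\<lambda>p. fst p *\<^sub>R axis 1 1 + snd p *\<^sub>R axis 2 1 :: real^2)) (box l r)
       = emeasure lborel ((\<lambda>p. fst p *\<^sub>R axis 1 1 + snd p *\<^sub>R axis 2 1 :: real^2) -` box l r \<inter> space lborel)"
      using meas by (intro emeasure_distr) auto
    also have "\<dots> = emeasure (lborel \<Otimes>\<^sub>M lborel) ({l$1<..<r$1} \<times> {l$2<..<r$2})"
      unfolding pre lborel_prod ..
    also have "\<dots> = ennreal (r$1 - l$1) * ennreal (r$2 - l$2)"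
      using l1 by (simp add: lborel.emeasure_pair_measure_Times)
    also have "\<dots> = (\<Prod>b\<in>Basis. (r - l) \<bullet> b)"
      using l1 by (simp add: prod_Basis2 inner_axis ennreal_mult)
    finally show ?thesis .
  qed
qed simp

definition vv :: "real^2 \<Rightarrow> real^2" where "vv u = vector [- (u$2), u$1]"

lemma vv_comp[simp]: "vv u $ 1 = - (u$2)" "vv u $ 2 = u$1"
  by (simp_all add: vv_def)

lemma unit2: "norm (u::real^2) = 1 \<Longrightarrow> (u$1)^2 + (u$2)^2 = 1"
  by (metis inner2 norm_eq_1 power2_eq_square)

definition Ti :: "real^2 \<Rightarrow> real^2 \<Rightarrow> real^2" where "Ti u y = vector [y \<bullet> u, y \<bullet> vv u]"

lemma Ti_comp[simp]: "Ti u y $ 1 = y \<bullet> u" "Ti u y $ 2 = y \<bullet> vv u"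
  by (simp_all add: Ti_def)

lemma Ti_orth: assumes "norm u = 1" shows "orthogonal_transformation (Ti u)"
proof -
  have u: "(u$1)^2 + (u$2)^2 = 1" using unit2[OF assms] .
  have lin: "linear (Ti u)"
    by (rule linearI) (auto simp: vec_eq_iff forall_2 inner_add_left)
  have "Ti u x \<bullet> Ti u y = x \<bullet> y" for x y
  proof -
    have "Ti u x \<bullet> Ti u y = (x$1*u$1 + x$2*u$2)*(y$1*u$1 + y$2*u$2) + (x$2*u$1 - x$1*u$2)*(y$2*u$1 - y$1*u$2)"
      by (simp add: inner2 algebra_simps)
    also have "\<dots> = (x$1*y$1 + x$2*y$2) * ((u$1)^2 + (u$2)^2)" by (simp add: algebra_simps power2_eq_square)
    finally show ?thesis using u by (simp add: inner2)
  qed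
  then show ?thesis unfolding orthogonal_transformation_def using lin by blast
qed

definition TT :: "real^2 \<Rightarrow> real^2 \<Rightarrow> real^2" where "TT u y = y$1 *\<^sub>R u + y$2 *\<^sub>R vv u"

lemma TT_Ti: assumes "norm u = 1" shows "TT u (Ti u y) = y" "Ti u (TT u y) = y"
proof -
  have u: "(u$1)^2 + (u$2)^2 = 1" using unit2[OF assms] .
  have a1: "TT u (Ti u y) $ 1 = y$1 * ((u$1)^2 + (u$2)^2)"
    by (simp add: TT_def inner2 algebra_simps power2_eq_square)
  have a2: "TT u (Ti u y) $ 2 = y$2 * ((u$1)^2 + (u$2)^2)"
    by (simp add: TT_def inner2 algebra_simps power2_eq_square)
  show "TT u (Ti u y) = y"
    unfolding vec_eq_iff forall_2 using a1 a2 u by simp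
  have b1: "Ti u (TT u y) $ 1 = y$1 * ((u$1)^2 + (u$2)^2)"
    by (simp add: TT_def inner2 algebra_simps power2_eq_square)
  have b2: "Ti u (TT u y) $ 2 = y$2 * ((u$1)^2 + (u$2)^2)"
    by (simp add: TT_def inner2 algebra_simps power2_eq_square)
  show "Ti u (TT u y) = y"
    unfolding vec_eq_iff forall_2 using b1 b2 u by simp
qed

lemma TT_cont[continuous_intros]: "continuous_on A (TT u)"
  unfolding TT_def by (intro continuous_intros)

lemma TT_distr: assumes "norm u = 1" shows "distr lborel borel (TT u) = lborel"
proof (rule lborel_eqI[symmetric])
  have meas: "TT u \<in> borel_measurable lborel"
  proof -
    have "TT u \<in> borel_measurable borel" by (intro borel_measurable_continuous_onI continuous_intros)
    then show ?thesis by (simp cong: measurable_cong_sets)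
  qed
  fix l r :: "real^2" assume lr: "\<And>b. b \<in> Basis \<Longrightarrow> l \<bullet> b \<le> r \<bullet> b"
  have pre: "TT u -` box l r = Ti u ` box l r"
  proof
    show "TT u -` box l r \<subseteq> Ti u ` box l r"
    proof
      fix x assume "x \<in> TT u -` box l r"
      then show "x \<in> Ti u ` box l r" using TT_Ti(2)[OF assms, of x] by (metis image_eqI vimageD)
    qed
    show "Ti u ` box l r \<subseteq> TT u -` box l r" using TT_Ti(1)[OF assms] by auto
  qed
  have bor: "TT u -` box l r \<in> sets lborel" using meas by (simp add: measurable_sets_borel)
  have "emeasure (distr lborel borel (TT u)) (box l r) = emeasure lborel (TT u -` box l r \<inter> space lborel)"
    using meas by (intro emeasure_distr) auto
  also have "\<dots> = emeasure lebesgue (Ti u ` box l r)"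
    using bor pre by simp
  also have "\<dots> = ennreal (measure lebesgue (Ti u ` box l r))"
    using measurable_orthogonal_image[OF Ti_orth[OF assms], of "box l r"]
    by (simp add: emeasure_eq_measure2 fmeasurableD2)
  also have "\<dots> = ennreal (measure lebesgue (box l r))"
    using measure_orthogonal_image[OF Ti_orth[OF assms], of "box l r"] by simp
  also have "\<dots> = emeasure lebesgue (box l r)"
    by (simp add: emeasure_eq_measure2)
  also have "\<dots> = emeasure lborel (box l r)" by simp
  also have "\<dots> = (\<Prod>b\<in>Basis. (r - l) \<bullet> b)"
    using lr by (simp add: emeasure_lborel_box_eq)
  finally show "emeasure (distr lborel borel (TT u)) (box l r) = (\<Prod>b\<in>Basis. (r - l) \<bullet> b)" .
qed simp



definition Phi :: "real^2 \<Rightarrow> real \<times> real \<Rightarrow> real^2" where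
  "Phi u p = fst p *\<^sub>R u + snd p *\<^sub>R vv u"

lemma Phi_cont[continuous_intros]: "continuous_on A (Phi u)"
  unfolding Phi_def by (intro continuous_intros)

lemma Phi_meas[measurable]: "Phi u \<in> borel_measurable borel"
  by (intro borel_measurable_continuous_onI continuous_intros)

lemma Phi_distr: assumes "norm u = 1" shows "distr lborel borel (Phi u) = lborel"
proof -
  define psi where "psi = (\<lambda>p::real\<times>real. fst p *\<^sub>R axis 1 1 + snd p *\<^sub>R axis 2 1 :: real^2)"
  have pm: "psi \<in> borel_measurable lborel"
  proof -
    have "psi \<in> borel_measurable borel" unfolding psi_def by (intro borel_measurable_continuous_onI continuous_intros)
    then show ?thesis by (simp cong: measurable_cong_sets)
  qed
  have tm: "TT u \<in> borel \<rightarrow>\<^sub>M borel" by (intro borel_measurable_continuous_onI continuous_intros)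
  have "Phi u = TT u \<circ> psi"
    by (auto simp: Phi_def TT_def psi_def axis_def fun_eq_iff)
  then have "distr lborel borel (Phi u) = distr (distr lborel borel psi) borel (TT u)"
    using distr_distr[OF tm pm] by simp
  also have "\<dots> = lborel" unfolding psi_def psi_distr using TT_distr[OF assms] .
  finally show ?thesis .
qed

lemma fubini_Phi:
  fixes g :: "real^2 \<Rightarrow> complex"
  assumes u: "norm u = 1" and gi: "integrable lborel g"
  shows "(\<integral>y. g y \<partial>lborel) = (\<integral>s. (\<integral>t. g (Phi u (s,t)) \<partial>lborel) \<partial>lborel)"
    and "integrable lborel (\<lambda>s. \<integral>t. g (Phi u (s,t)) \<partial>lborel)"
proof -
  have gm[measurable]: "g \<in> borel_measurable borel" using gi by auto
  have pm: "Phi u \<in> (lborel :: (real\<times>real) measure) \<rightarrow>\<^sub>M borel"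
    by (simp cong: measurable_cong_sets)
  have "(\<integral>y. g y \<partial>lborel) = (\<integral>y. g y \<partial>distr lborel borel (Phi u))" by (simp add: Phi_distr[OF u])
  also have "\<dots> = (\<integral>p. g (Phi u p) \<partial>(lborel :: (real\<times>real) measure))"
    by (rule integral_distr[OF pm gm])
  also have "\<dots> = (\<integral>p. g (Phi u p) \<partial>(lborel \<Otimes>\<^sub>M lborel))" by (simp add: lborel_prod)
  finally have e1: "(\<integral>y. g y \<partial>lborel) = (\<integral>p. g (Phi u p) \<partial>(lborel \<Otimes>\<^sub>M lborel))" .
  have "integrable (distr lborel borel (Phi u)) g" using gi by (simp add: Phi_distr[OF u])
  then have "integrable (lborel :: (real\<times>real) measure) (\<lambda>p. g (Phi u p))"
    using integrable_distr_eq[OF pm gm] by simp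
  then have ii: "integrable (lborel \<Otimes>\<^sub>M lborel) (\<lambda>p. g (Phi u p))" by (simp add: lborel_prod)
  show "(\<integral>y. g y \<partial>lborel) = (\<integral>s. (\<integral>t. g (Phi u (s,t)) \<partial>lborel) \<partial>lborel)"
    unfolding e1 using lborel_pair.integral_fst'[OF ii] by simp
  show "integrable lborel (\<lambda>s. \<integral>t. g (Phi u (s,t)) \<partial>lborel)"
    using lborel_pair.integrable_fst'[OF ii] by simp
qed



lemma norm_vv: "norm (vv u) = norm u"
  by (simp add: norm_eq_sqrt_inner inner2 algebra_simps)

lemma Phi_inner: assumes "norm u = 1"
  shows "Phi u (s,t) \<bullet> u = s" "Phi u (s,t) \<bullet> vv u = t"
proof -
  have u: "(u$1)^2 + (u$2)^2 = 1" using unit2[OF assms] .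
  have "Phi u (s,t) \<bullet> u = s * ((u$1)^2 + (u$2)^2)"
    by (simp add: Phi_def inner2 algebra_simps power2_eq_square)
  then show "Phi u (s,t) \<bullet> u = s" using u by simp
  have "Phi u (s,t) \<bullet> vv u = t * ((u$1)^2 + (u$2)^2)"
    by (simp add: Phi_def inner2 algebra_simps power2_eq_square)
  then show "Phi u (s,t) \<bullet> vv u = t" using u by simp
qed

lemma normsq: assumes "norm u = 1" shows "(z \<bullet> u)^2 + (z \<bullet> vv u)^2 = z \<bullet> z"
proof -
  have u: "(u$1)^2 + (u$2)^2 = 1" using unit2[OF assms] .
  have "(z \<bullet> u)^2 + (z \<bullet> vv u)^2 = (z \<bullet> z) * ((u$1)^2 + (u$2)^2)"
    by (simp add: inner2 algebra_simps power2_eq_square)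
  then show ?thesis using u by simp
qed

lemma cap:
  assumes u: "norm u = 1" and z: "norm z \<le> R" and d: "0 \<le> d" and zu: "R - d \<le> \<bar>z \<bullet> u\<bar>"
  shows "\<bar>z \<bullet> vv u\<bar> \<le> sqrt (2 * R * d)"
proof -
  have R0: "0 \<le> R" using z norm_ge_zero order_trans by blast
  have zz: "z \<bullet> z \<le> R^2"
  proof -
    have "(norm z)^2 \<le> R^2" using z by (intro power_mono) auto
    then show ?thesis by (simp add: power2_norm_eq_inner)
  qed
  have eq: "(z \<bullet> vv u)^2 = z \<bullet> z - (z \<bullet> u)^2" using normsq[OF u, of z] by simp
  have "(z \<bullet> vv u)^2 \<le> 2 * R * d"
  proof (cases "R - d \<ge> 0")
    case True
    have "(R - d)^2 \<le> \<bar>z \<bullet> u\<bar>^2" using True zu by (intro power_mono) auto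
    then have "(R - d)^2 \<le> (z \<bullet> u)^2" by simp
    then have "(z \<bullet> vv u)^2 \<le> R^2 - (R - d)^2" using eq zz by linarith
    also have "\<dots> \<le> 2 * R * d" using d by (simp add: power2_eq_square algebra_simps)
    finally show ?thesis .
  next
    case False
    have "(z \<bullet> vv u)^2 \<le> R^2" using eq zz zero_le_power2[of "z \<bullet> u"] by linarith
    also have "\<dots> \<le> 2 * R * d" proof -
      have "R * R \<le> R * (2 * d)" using False R0 by (intro mult_left_mono) auto
      then show ?thesis by (simp add: power2_eq_square algebra_simps)
    qed
    finally show ?thesis .
  qed
  then have "\<bar>z \<bullet> vv u\<bar>^2 \<le> 2 * R * d" by simp
  then show ?thesis by (rule real_le_rsqrt)
qed

definition sec :: "real^2 \<Rightarrow> (real^2) set \<Rightarrow> real \<Rightarrow> real set" where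
  "sec u K s = {t. Phi u (s,t) \<in> K}"

lemma sec_closed: "closed K \<Longrightarrow> closed (sec u K s)"
proof -
  assume "closed K"
  moreover have "continuous (at t) (\<lambda>t. Phi u (s,t))" for t
    unfolding Phi_def by (intro continuous_intros)
  ultimately have "closed ((\<lambda>t. Phi u (s,t)) -` K)" by (rule continuous_closed_vimage)
  then show ?thesis by (simp add: sec_def vimage_def)
qed

lemma sec_bounded: assumes u: "norm u = 1" and "bounded K" shows "bounded (sec u K s)"
proof -
  obtain B where B: "\<And>y. y \<in> K \<Longrightarrow> norm y \<le> B" using assms(2) bounded_iff by blast
  have "norm t \<le> B" if "t \<in> sec u K s" for t
  proof -
    have "\<bar>t\<bar> = \<bar>Phi u (s,t) \<bullet> vv u\<bar>" using Phi_inner[OF u] by simp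
    also have "\<dots> \<le> norm (Phi u (s,t)) * norm (vv u)" by (rule Cauchy_Schwarz_ineq2)
    also have "\<dots> \<le> B" using B[of "Phi u (s,t)"] that u by (simp add: sec_def norm_vv)
    finally show ?thesis by simp
  qed
  then show ?thesis unfolding bounded_iff by blast
qed

lemma sec_convex: assumes "convex K" shows "convex (sec u K s)"
proof (rule convexI)
  fix x y a b :: real assume xy: "x \<in> sec u K s" "y \<in> sec u K s" and ab: "0 \<le> a" "0 \<le> b" "a + b = 1"
  have "Phi u (s, a*x + b*y) = a *\<^sub>R Phi u (s,x) + b *\<^sub>R Phi u (s,y)"
  proof -
    have "a *\<^sub>R (s *\<^sub>R u) + b *\<^sub>R (s *\<^sub>R u) = (a + b) *\<^sub>R (s *\<^sub>R u)" by (rule scaleR_add_left[symmetric])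
    then have "a *\<^sub>R (s *\<^sub>R u) + b *\<^sub>R (s *\<^sub>R u) = s *\<^sub>R u" using ab by simp
    then show ?thesis by (simp add: Phi_def algebra_simps)
  qed
  moreover have "a *\<^sub>R Phi u (s,x) + b *\<^sub>R Phi u (s,y) \<in> K"
    using xy ab by (intro convexD[OF assms]) (auto simp: sec_def)
  ultimately show "a *\<^sub>R x + b *\<^sub>R y \<in> sec u K s" by (simp add: sec_def)
qed

lemma sec_fmeas: assumes "norm u = 1" "compact K" shows "sec u K s \<in> fmeasurable lborel"
proof -
  have "bounded (sec u K s)" "closed (sec u K s)" using assms by (auto simp: compact_eq_bounded_closed sec_closed sec_bounded)
  then show ?thesis using emeasure_bounded_finite[of "sec u K s"] by (intro fmeasurableI) auto
qed

lemma sec_meas_le: assumes "norm u = 1" "compact K" "sec u K s \<subseteq> {p..q}" "p \<le> q"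
  shows "measure lborel (sec u K s) \<le> q - p"
proof -
  have "measure lborel (sec u K s) \<le> measure lborel {p..q}"
    using assms sec_fmeas[OF assms(1,2), of s]
    by (intro measure_mono_fmeasurable) (auto simp: fmeasurableD intro!: fmeasurableI)
  then show ?thesis using assms by simp
qed



lemma Phi_decomp: assumes "norm u = 1" shows "Phi u (y \<bullet> u, y \<bullet> vv u) = y"
  using TT_Ti(1)[OF assms, of y] by (simp add: Phi_def TT_def)

lemma compact_real_Inf_Sup:
  fixes S :: "real set" assumes "compact S" "S \<noteq> {}"
  shows "Inf S \<in> S" "Sup S \<in> S" "S \<subseteq> {Inf S..Sup S}"
proof -
  have bS: "bounded S" using assms(1) by (rule compact_imp_bounded)
  have bb: "bdd_below S" "bdd_above S" using bS by (auto intro: bounded_imp_bdd_below bounded_imp_bdd_above)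
  show "Inf S \<in> S" using assms bb by (intro closed_contains_Inf) (auto simp: compact_imp_closed)
  show "Sup S \<in> S" using assms bb by (intro closed_contains_Sup) (auto simp: compact_imp_closed)
  show "S \<subseteq> {Inf S..Sup S}" using bb by (auto intro: cInf_lower cSup_upper)
qed

lemma main_dir:
  fixes K :: "(real^2) set" and u c t0 t1 e e' :: "real^2"
  assumes u: "norm u = 1" and cK: "compact K" and vK: "convex K"
   and in0: "\<And>y. y \<in> K \<Longrightarrow> norm (y + t0 - c) \<le> R" and e0: "e \<in> K" "e + t0 = c + R *\<^sub>R u"
   and in1: "\<And>y. y \<in> K \<Longrightarrow> norm (y + t1 - c) \<le> R" and e1: "e' \<in> K" "e' + t1 = c - R *\<^sub>R u"
   and lam: "0 < lam"
  shows "norm (integral K (\<lambda>y. EE lam (u \<bullet> y))) \<le> 2 * sqrt (2*R) * lam powr (-3/2)"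
proof -
  have uu: "u \<bullet> u = 1" using u by (simp add: norm_eq_1)
  have R0: "0 \<le> R" using in0[OF e0(1)] norm_ge_zero order_trans by blast
  define a where "a = e' \<bullet> u"
  define b where "b = e \<bullet> u"
  define w where "w s = measure lborel (sec u K s)" for s
  define Kc where "Kc = 2 * sqrt (2 * R)"
  have t0: "t0 = c + R *\<^sub>R u - e" using e0(2) by (simp add: algebra_simps)
  have t1: "t1 = c - R *\<^sub>R u - e'" using e1(2) by (simp add: algebra_simps)
  have zu0: "(y + t0 - c) \<bullet> u = y \<bullet> u - b + R" for y
    unfolding t0 b_def by (simp add: inner_simps uu)
  have zu1: "(y + t1 - c) \<bullet> u = y \<bullet> u - a - R" for y
    unfolding t1 a_def by (simp add: inner_simps uu)
  have cs: "\<bar>z \<bullet> u\<bar> \<le> norm z" for z using Cauchy_Schwarz_ineq2[of z u] u by simp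
  have level: "a \<le> y \<bullet> u \<and> y \<bullet> u \<le> b" if "y \<in> K" for y
  proof -
    have A0: "\<bar>(y + t0 - c) \<bullet> u\<bar> \<le> R" using cs[of "y + t0 - c"] in0[OF that] by linarith
    have A1: "\<bar>(y + t1 - c) \<bullet> u\<bar> \<le> R" using cs[of "y + t1 - c"] in1[OF that] by linarith
    have "(y + t0 - c) \<bullet> u \<le> R" using A0 by (rule abs_le_D1)
    moreover have "- ((y + t1 - c) \<bullet> u) \<le> R" using A1 by (rule abs_le_D2)
    ultimately show ?thesis using zu0[of y] zu1[of y] by linarith
  qed
  have secPhi: "t \<in> sec u K s \<Longrightarrow> Phi u (s,t) \<in> K" for s t by (simp add: sec_def)
  have out: "w s = 0" if "s < a \<or> b < s" for s
  proof -
    have "sec u K s = {}" using level secPhi Phi_inner(1)[OF u] that by force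
    then show ?thesis by (simp add: w_def)
  qed
  have hi: "w s \<le> Kc * sqrt (b - s)" if "s \<le> b" for s
  proof -
    define m where "m = c \<bullet> vv u - t0 \<bullet> vv u"
    define r where "r = sqrt (2 * R * (b - s))"
    have "sec u K s \<subseteq> {m - r..m + r}"
    proof
      fix t assume t: "t \<in> sec u K s"
      let ?z = "Phi u (s,t) + t0 - c"
      have "norm ?z \<le> R" using in0 secPhi[OF t] .
      moreover have "R - (b - s) \<le> \<bar>?z \<bullet> u\<bar>" using zu0[of "Phi u (s,t)"] Phi_inner[OF u] by simp
      ultimately have "\<bar>?z \<bullet> vv u\<bar> \<le> r" unfolding r_def using that by (intro cap[OF u]) auto
      moreover have "?z \<bullet> vv u = t - m" using Phi_inner[OF u] by (simp add: m_def inner_simps)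
      ultimately show "t \<in> {m - r..m + r}" by auto
    qed
    then have "w s \<le> (m + r) - (m - r)" unfolding w_def
      using cK u that R0 by (intro sec_meas_le) (auto simp: r_def)
    also have "\<dots> = Kc * sqrt (b - s)" by (simp add: r_def Kc_def real_sqrt_mult)
    finally show ?thesis .
  qed
  have lo: "w s \<le> Kc * sqrt (s - a)" if "a \<le> s" for s
  proof -
    define m where "m = c \<bullet> vv u - t1 \<bullet> vv u"
    define r where "r = sqrt (2 * R * (s - a))"
    have "sec u K s \<subseteq> {m - r..m + r}"
    proof
      fix t assume t: "t \<in> sec u K s"
      let ?z = "Phi u (s,t) + t1 - c"
      have "norm ?z \<le> R" using in1 secPhi[OF t] .
      moreover have "R - (s - a) \<le> \<bar>?z \<bullet> u\<bar>" using zu1[of "Phi u (s,t)"] Phi_inner[OF u] by simp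
      ultimately have "\<bar>?z \<bullet> vv u\<bar> \<le> r" unfolding r_def using that by (intro cap[OF u]) auto
      moreover have "?z \<bullet> vv u = t - m" using Phi_inner[OF u] by (simp add: m_def inner_simps)
      ultimately show "t \<in> {m - r..m + r}" by auto
    qed
    then have "w s \<le> (m + r) - (m - r)" unfolding w_def
      using cK u that R0 by (intro sec_meas_le) (auto simp: r_def)
    also have "\<dots> = Kc * sqrt (s - a)" by (simp add: r_def Kc_def real_sqrt_mult)
    finally show ?thesis .
  qed
  have ab: "a \<le> b" using level[OF e0(1)] by (simp add: b_def)
  have nonemp: "sec u K r \<noteq> {}" if rr: "a \<le> r" "r \<le> b" for r
  proof -
    obtain y where y: "y \<in> K" "y \<bullet> u = r"
    proof (cases "a = b")
      case True then show ?thesis using rr e1(1) by (intro that[of e']) (auto simp: a_def)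
    next
      case False
      define th where "th = (r - a) / (b - a)"
      have th: "0 \<le> th" "th \<le> 1" using rr ab False by (auto simp: th_def field_simps)
      let ?y = "(1 - th) *\<^sub>R e' + th *\<^sub>R e"
      have "?y \<in> K" using th by (intro convexD[OF vK e1(1) e0(1)]) auto
      moreover have "?y \<bullet> u = r"
      proof -
        have "?y \<bullet> u = a + th * (b - a)" by (simp add: inner_simps a_def b_def algebra_simps)
        also have "th * (b - a) = r - a" using False by (simp add: th_def)
        finally show ?thesis by simp
      qed
      ultimately show ?thesis by (rule that)
    qed
    then have "y \<bullet> vv u \<in> sec u K r" using Phi_decomp[OF u, of y] by (simp add: sec_def)
    then show ?thesis by auto
  qed
  have cs_sec: "compact (sec u K s)" for s
    using cK u by (simp add: compact_eq_bounded_closed sec_closed sec_bounded)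
  have conc: "w (s - h) + w (s + h) \<le> 2 * w s" if h: "0 \<le> h" "a \<le> s - h" "s + h \<le> b" for s h
  proof -
    define S1 where "S1 = sec u K (s - h)"
    define S2 where "S2 = sec u K (s + h)"
    have n1: "S1 \<noteq> {}" and n2: "S2 \<noteq> {}" using nonemp h by (auto simp: S1_def S2_def)
    have c1: "compact S1" and c2: "compact S2" using cs_sec by (auto simp: S1_def S2_def)
    define p1 where "p1 = Inf S1" define q1 where "q1 = Sup S1"
    define p2 where "p2 = Inf S2" define q2 where "q2 = Sup S2"
    have p1: "p1 \<in> S1" "q1 \<in> S1" "S1 \<subseteq> {p1..q1}" using compact_real_Inf_Sup[OF c1 n1] by (auto simp: p1_def q1_def)
    have p2: "p2 \<in> S2" "q2 \<in> S2" "S2 \<subseteq> {p2..q2}" using compact_real_Inf_Sup[OF c2 n2] by (auto simp: p2_def q2_def)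
    have pq1: "p1 \<le> q1" using p1 by auto
    have pq2: "p2 \<le> q2" using p2 by auto
    have mid: "(x1 + x2) / 2 \<in> sec u K s" if "x1 \<in> S1" "x2 \<in> S2" for x1 x2
    proof -
      have "Phi u (s, (x1 + x2) / 2) = (1/2) *\<^sub>R Phi u (s - h, x1) + (1/2) *\<^sub>R Phi u (s + h, x2)"
        unfolding Phi_def vec_eq_iff by (simp add: field_simps)
      moreover have "(1/2) *\<^sub>R Phi u (s - h, x1) + (1/2) *\<^sub>R Phi u (s + h, x2) \<in> K"
      proof -
        have "Phi u (s - h, x1) \<in> K" "Phi u (s + h, x2) \<in> K" using that by (simp_all add: S1_def S2_def sec_def)
        then show ?thesis by (intro convexD[OF vK]) auto
      qed
      ultimately show ?thesis by (simp add: sec_def)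
    qed
    have sub: "{(p1 + p2)/2..(q1 + q2)/2} \<subseteq> sec u K s"
    proof -
      have "closed_segment ((p1 + p2)/2) ((q1 + q2)/2) \<subseteq> sec u K s"
        using sec_convex[OF vK] mid[OF p1(1) p2(1)] mid[OF p1(2) p2(2)] unfolding convex_contains_segment by blast
      then show ?thesis using pq1 pq2 by (simp add: closed_segment_eq_real_ivl)
    qed
    have "measure lborel {(p1 + p2)/2..(q1 + q2)/2} \<le> w s" unfolding w_def
      using sub sec_fmeas[OF u cK, of s] by (intro measure_mono_fmeasurable) (auto simp: fmeasurableD)
    then have m: "(q1 + q2)/2 - (p1 + p2)/2 \<le> w s" using pq1 pq2 by simp
    have "w (s - h) \<le> q1 - p1" unfolding w_def using p1 pq1 u cK by (intro sec_meas_le) (auto simp: S1_def)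
    moreover have "w (s + h) \<le> q2 - p2" unfolding w_def using p2 pq2 u cK by (intro sec_meas_le) (auto simp: S2_def)
    moreover have "(q1 - p1) + (q2 - p2) \<le> 2 * w s" using m by (simp add: field_simps)
    ultimately show ?thesis by linarith
  qed
  have w0: "0 \<le> w s" for s by (simp add: w_def)
  define g where "g y = indicator K y *\<^sub>R EE lam (u \<bullet> y)" for y
  have contf: "continuous_on A (\<lambda>y. EE lam (u \<bullet> y))" for A
    unfolding EE_def by (intro continuous_intros)
  have gi: "integrable lborel g" unfolding g_def using cK contf by (intro borel_integrable_compact) auto
  have "integral K (\<lambda>y. EE lam (u \<bullet> y)) = integral UNIV g"
  proof -
    have "integral UNIV g = integral K (\<lambda>y. EE lam (u \<bullet> y))"
    proof -
      have "g = (\<lambda>y. if y \<in> K then EE lam (u \<bullet> y) else 0)" by (auto simp: g_def indicator_def fun_eq_iff)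
      then show ?thesis by (simp only: Henstock_Kurzweil_Integration.integral_restrict_UNIV)
    qed
    then show ?thesis by simp
  qed
  also have "\<dots> = (\<integral>y. g y \<partial>lborel)" by (rule integral_lborel[OF gi])
  also have "\<dots> = (\<integral>s. (\<integral>t. g (Phi u (s,t)) \<partial>lborel) \<partial>lborel)" by (rule fubini_Phi(1)[OF u gi])
  finally have I1: "integral K (\<lambda>y. EE lam (u \<bullet> y)) = (\<integral>s. (\<integral>t. g (Phi u (s,t)) \<partial>lborel) \<partial>lborel)" .
  have inner: "(\<integral>t. g (Phi u (s,t)) \<partial>lborel) = w s *\<^sub>R EE lam s" for s
  proof -
    have "(\<integral>t. g (Phi u (s,t)) \<partial>lborel) = (\<integral>t. indicator (sec u K s) t *\<^sub>R EE lam s \<partial>lborel)"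
    proof (rule Bochner_Integration.integral_cong)
      fix t
      have "u \<bullet> Phi u (s,t) = s" using Phi_inner(1)[OF u] by (simp add: inner_commute)
      then show "g (Phi u (s,t)) = indicator (sec u K s) t *\<^sub>R EE lam s"
        by (auto simp: g_def sec_def indicator_def)
    qed simp
    also have "\<dots> = (\<integral>t. indicator (sec u K s) t \<partial>lborel) *\<^sub>R EE lam s"
    proof (rule integral_scaleR_left)
      show "integrable lborel (indicator (sec u K s) :: real \<Rightarrow> real)"
      proof -
        have F: "sec u K s \<in> fmeasurable lborel" by (rule sec_fmeas[OF u cK])
        have "sec u K s \<in> sets lborel" using F by (rule fmeasurableD)
        moreover have "emeasure lborel (sec u K s) < \<infinity>" using fmeasurableD2[OF F] by (simp add: top.not_eq_extremum)
        ultimately show ?thesis unfolding integrable_indicator_iff by simp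
      qed
    qed
    also have "\<dots> = w s *\<^sub>R EE lam s" by (simp add: w_def)
    finally show ?thesis .
  qed
  have I2: "integral K (\<lambda>y. EE lam (u \<bullet> y)) = (\<integral>s. w s *\<^sub>R EE lam s \<partial>lborel)"
    unfolding I1 inner ..
  have iwE: "integrable lborel (\<lambda>s. w s *\<^sub>R EE lam s)"
    using fubini_Phi(2)[OF u gi] unfolding inner .
  have wint: "integrable lborel w"
  proof -
    have "integrable lborel (\<lambda>s. norm (w s *\<^sub>R EE lam s))" using iwE by (rule integrable_norm)
    moreover have "(\<lambda>s. norm (w s *\<^sub>R EE lam s)) = w" using w0 by (simp add: fun_eq_iff)
    ultimately show ?thesis by (simp only:)
  qed
  have Kc0: "0 \<le> Kc" using R0 by (simp add: Kc_def)
  have "norm (\<integral>s. w s *\<^sub>R EE lam s \<partial>lborel) \<le> Kc * lam powr (-3/2)"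
    by (rule oneD[OF wint w0 out lo hi conc Kc0 lam])
  then show ?thesis unfolding I2 Kc_def .
qed


theorem theorem6:
  fixes \<Omega> :: "(real^2) set"
  assumes "bounded \<Omega>" and "convex \<Omega>" and "measure lebesgue \<Omega> > 0"
    and "\<exists>c R. rolls_unimpeded_in \<Omega> c R"
  shows "\<exists>C. \<forall>\<xi>::real^2. \<xi> \<noteq> 0 \<longrightarrow> norm (fourier_char \<Omega> \<xi>) \<le> C * norm \<xi> powr (-3/2)"
proof -
  obtain c R where roll: "rolls_unimpeded_in \<Omega> c R" using assms(4) by blast
  have R: "0 < R" and rl: "\<And>x. x \<in> sphere c R \<Longrightarrow> \<exists>t. (\<lambda>y. t + y) ` \<Omega> \<subseteq> cball c R \<and> x \<in> frontier ((\<lambda>y. t + y) ` \<Omega>)"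
    using roll unfolding rolls_unimpeded_in_def by auto
  define K where "K = closure \<Omega>"
  have cK: "compact K" unfolding K_def using assms(1) by (simp add: compact_closure)
  have vK: "convex K" unfolding K_def using assms(2) by (simp add: convex_closure)
  have pts: "\<exists>t e. e \<in> K \<and> e + t = x \<and> (\<forall>y\<in>K. norm (y + t - c) \<le> R)" if x: "x \<in> sphere c R" for x
  proof -
    obtain t where t: "(\<lambda>y. t + y) ` \<Omega> \<subseteq> cball c R" "x \<in> frontier ((\<lambda>y. t + y) ` \<Omega>)" using rl[OF x] by blast
    have cl: "closure ((\<lambda>y. t + y) ` \<Omega>) = (\<lambda>y. t + y) ` K"
      unfolding K_def using closure_translation[of t \<Omega>] by simp
    have sub: "closure ((\<lambda>y. t + y) ` \<Omega>) \<subseteq> cball c R" using t(1) by (intro closure_minimal) auto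
    have "x \<in> (\<lambda>y. t + y) ` K" using t(2) cl unfolding frontier_def by blast
    then obtain e where e: "e \<in> K" "x = t + e" by blast
    have "norm (y + t - c) \<le> R" if "y \<in> K" for y
    proof -
      have "t + y \<in> cball c R" using sub cl that by blast
      then show ?thesis by (simp add: dist_norm norm_minus_commute algebra_simps)
    qed
    then show ?thesis using e by (intro exI[of _ t] exI[of _ e]) (auto simp: add.commute)
  qed
  show ?thesis
  proof (intro exI[of _ "2 * sqrt (2 * R)"] allI impI)
    fix \<xi> :: "real^2" assume xi: "\<xi> \<noteq> 0"
    define lam where "lam = norm \<xi>"
    define u where "u = (1 / lam) *\<^sub>R \<xi>"
    have lam: "0 < lam" using xi by (simp add: lam_def)
    have u: "norm u = 1" using lam by (simp add: u_def lam_def)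
    have xiu: "\<xi> = lam *\<^sub>R u" using lam by (simp add: u_def)
    have s0: "c + R *\<^sub>R u \<in> sphere c R" using u R by (simp add: dist_norm)
    have s1: "c - R *\<^sub>R u \<in> sphere c R" using u R by (simp add: dist_norm)
    obtain t0 e where E0: "e \<in> K" "e + t0 = c + R *\<^sub>R u" "\<And>y. y \<in> K \<Longrightarrow> norm (y + t0 - c) \<le> R"
      using pts[OF s0] by blast
    obtain t1 e' where E1: "e' \<in> K" "e' + t1 = c - R *\<^sub>R u" "\<And>y. y \<in> K \<Longrightarrow> norm (y + t1 - c) \<le> R"
      using pts[OF s1] by blast
    have main: "norm (integral K (\<lambda>y. EE lam (u \<bullet> y))) \<le> 2 * sqrt (2*R) * lam powr (-3/2)"
      by (rule main_dir[OF u cK vK E0(3) E0(1,2) E1(3) E1(1,2) lam])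
    have "fourier_char \<Omega> \<xi> = integral \<Omega> (\<lambda>y. EE lam (u \<bullet> y))"
      unfolding fourier_char_def EE_def xiu by simp
    also have "\<dots> = integral K (\<lambda>y. EE lam (u \<bullet> y))"
    proof (rule integral_spike_set)
      have "{x \<in> \<Omega> - K. EE lam (u \<bullet> x) \<noteq> 0} = {}" unfolding K_def using closure_subset by blast
      then show "negligible {x \<in> \<Omega> - K. EE lam (u \<bullet> x) \<noteq> 0}" by (simp only: negligible_empty)
      have "{x \<in> K - \<Omega>. EE lam (u \<bullet> x) \<noteq> 0} \<subseteq> frontier \<Omega>"
        unfolding K_def frontier_def using interior_subset by auto
      then show "negligible {x \<in> K - \<Omega>. EE lam (u \<bullet> x) \<noteq> 0}"
        using negligible_convex_frontier[OF assms(2)] negligible_subset by blast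
    qed
    finally show "norm (fourier_char \<Omega> \<xi>) \<le> 2 * sqrt (2 * R) * norm \<xi> powr (-3/2)"
      using main by (simp add: lam_def)
  qed
qed

end
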